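(* Let $G\in\mathcal{P}_*(\Theta)$. For any bounded continuous functions $f_1,\ldots,f_m$ on $\Theta$ and any $\varepsilon_1,\ldots,\varepsilon_m>0$ there exists $n\in\mathbb{N}$ such that the measure $G^{(n)}=\sum_{l=1}^{2^n}G(\Theta_{n,l})\delta_{\mu_{n+1,2l-1}}$ satisfies $\left|\int_\Theta f_i\,d(G^{(n)}-G)\right|<\varepsilon_i$ for all $i=1,\ldots,m$.
   Context: $\Theta\subseteq\mathbb{R}$ is $\mathbb{R}$, a closed half-line, or a compact interval with nonempty interior. $\mathcal{P}_*(\Theta)$ is the set of Borel probability measures on $\Theta$ whose support is a non-degenerate compact interval. $G$ is identified with its distribution function; $b_G(a_1,a_2]=\int_{(a_1,a_2]}\theta\,dG/(G(a_2)-G(a_1))$ if $G(a_2)>G(a_1)$, else $a_1$. SBA: $\mu_{1,1}=\int\theta\,dG$; for $j\ge2$, $\mu_{j,2l}=\mu_{j-1,l}$, $\mu_{j,2l-1}=b_G(\mu_{j-1,l-1},\mu_{j-1,l}]$, with $\mu_{j,0}=\inf\Theta$, $\mu_{j,2^j}=\sup\Theta$. $\Theta_{n,1}=[\mu_{n,0},\mu_{n,1}]$ if $\mu_{n,0}>-\infty$, else $(\mu_{n,0},\mu_{n,1}]$; $\Theta_{n,l}=(\mu_{n,l-1},\mu_{n,l}]$ for $2\le l\le 2^n-1$; $\Theta_{n,2^n}=(\mu_{n,2^n-1},\mu_{n,2^n}]$ if $\mu_{n,2^n}<\infty$, else $(\mu_{n,2^n-1},\infty)$. *)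

theory Defs
  imports "HOL-Probability.Probability"
begin

definition admissible_Theta :: "real set \<Rightarrow> bool" where
  "admissible_Theta T \<longleftrightarrow> T = UNIV \<or> (\<exists>a. T = {a..} \<or> T = {..a}) \<or> (\<exists>a b. a < b \<and> T = {a..b})"

definition real_support :: "real measure \<Rightarrow> real set" where
  "real_support M = {x. \<forall>e>0. emeasure M (ball x e) > 0}"

text \<open>G is in P_*(Theta): Borel probability measure on Theta (realised as a probability
measure on the Borel sets of the real line concentrated on Theta) whose support is a
non-degenerate compact interval.\<close>
definition P_star :: "real set \<Rightarrow> real measure \<Rightarrow> bool" where
  "P_star T G \<longleftrightarrow> sets G = sets borel \<and> prob_space G \<and> emeasure G (UNIV - T) = 0
     \<and> (\<exists>a b. a < b \<and> real_support G = {a..b})"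

definition hoi :: "ereal \<Rightarrow> ereal \<Rightarrow> real set" where
  "hoi a1 a2 = {x. a1 < ereal x \<and> ereal x \<le> a2}"

text \<open>b_G(a1,a2]: note G(a2) - G(a1) = G((a1,a2]).\<close>
definition bG :: "real measure \<Rightarrow> ereal \<Rightarrow> ereal \<Rightarrow> ereal" where
  "bG G a1 a2 = (if measure G (hoi a1 a2) > 0
      then ereal ((LINT x:hoi a1 a2|G. x) / measure G (hoi a1 a2)) else a1)"

definition infT :: "real set \<Rightarrow> ereal" where "infT T = Inf (ereal ` T)"
definition supT :: "real set \<Rightarrow> ereal" where "supT T = Sup (ereal ` T)"

text \<open>SBA points mu_{j,l} for j >= 1 and 0 <= l <= 2^j (other values are junk).\<close>
primrec sba :: "real measure \<Rightarrow> real set \<Rightarrow> nat \<Rightarrow> nat \<Rightarrow> ereal" where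
  "sba G T 0 l = 0"
| "sba G T (Suc j) l =
     (if j = 0 then
        (if l = 0 then infT T else if l = 1 then ereal (integral\<^sup>L G (\<lambda>x. x)) else supT T)
      else if l = 0 then infT T
      else if 2 ^ Suc j \<le> l then supT T
      else if even l then sba G T j (l div 2)
      else bG G (sba G T j (l div 2)) (sba G T j (l div 2 + 1)))"

definition cell :: "real measure \<Rightarrow> real set \<Rightarrow> nat \<Rightarrow> nat \<Rightarrow> real set" where
  "cell G T n l = (if l = 1
      then {x. sba G T n 0 \<le> ereal x \<and> ereal x \<le> sba G T n 1}
      else hoi (sba G T n (l - 1)) (sba G T n l))"

definition int_Gn :: "real measure \<Rightarrow> real set \<Rightarrow> nat \<Rightarrow> (real \<Rightarrow> real) \<Rightarrow> real" where
  "int_Gn G T n f = (\<Sum>l=1..2^n. measure G (cell G T n l) * f (real_of_ereal (sba G T (Suc n) (2*l - 1))))"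

end

theory Submission
  imports Defs
begin

lemma sba_0: "1 \<le> n \<Longrightarrow> sba G T n 0 = infT T" by (cases n) auto

lemma sba_top: "1 \<le> n \<Longrightarrow> 2^n \<le> l \<Longrightarrow> sba G T n l = supT T"
proof (cases n)
  case (Suc j)
  assume "2^n \<le> l"
  then have "l \<noteq> 0" by (metis le_zero_eq power_not_zero zero_neq_numeral)
  moreover have "j = 0 \<Longrightarrow> l \<noteq> 1" using \<open>2^n \<le> l\<close> Suc by auto
  ultimately show ?thesis using Suc \<open>2^n \<le> l\<close> by auto
qed simp

lemma sba_even: "1 \<le> n \<Longrightarrow> 0 < k \<Longrightarrow> k < 2^n \<Longrightarrow> sba G T (Suc n) (2*k) = sba G T n k"
  by auto

lemma sba_odd: "1 \<le> n \<Longrightarrow> k < 2^n \<Longrightarrow> sba G T (Suc n) (2*k+1) = bG G (sba G T n k) (sba G T n (Suc k))"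
  by auto

locale sba_ctx =
  fixes G :: "real measure" and T :: "real set" and a b :: real
  assumes sets_G: "sets G = sets borel" and prob: "prob_space G" and ab: "a < b"
  and null_out: "emeasure G (UNIV - {a..b}) = 0"
  and pos: "\<And>x y. a \<le> x \<Longrightarrow> x < y \<Longrightarrow> y \<le> b \<Longrightarrow> measure G {x<..<y} > 0"
  and sub: "{a..b} \<subseteq> T" and closedT: "closed T"
begin

lemma space_G[simp]: "space G = UNIV"
  using sets_eq_imp_space_eq[OF sets_G] by simp

lemma sets_G_I[measurable]: "S \<in> sets borel \<Longrightarrow> S \<in> sets G"
  using sets_G by simp

lemma meas_G: "f \<in> borel_measurable G \<longleftrightarrow> f \<in> borel_measurable borel"
  by (simp add: measurable_cong_sets[OF sets_G refl])

interpretation P: prob_space G by (rule prob)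

lemma AE_ab: "AE x in G. x \<in> {a..b}"
proof (rule AE_I'[where N="UNIV - {a..b}"])
  show "UNIV - {a..b} \<in> null_sets G" using null_out by (simp add: null_sets_def)
qed auto

lemma meas_le1: "measure G S \<le> 1" by (rule P.prob_le_1)

lemma integrable_id: "integrable G (\<lambda>x. x)"
proof -
  have 1: "integrable G (\<lambda>x. max \<bar>a\<bar> \<bar>b\<bar>)" by simp
  have 2: "(\<lambda>x. x) \<in> borel_measurable G" by (simp add: meas_G)
  have 3: "AE x in G. norm x \<le> norm (max \<bar>a\<bar> \<bar>b\<bar>)"
    using AE_ab by eventually_elim auto
  show ?thesis by (rule Bochner_Integration.integrable_bound[OF 1 2 3])
qed

lemma integrable_ind_id: "S \<in> sets borel \<Longrightarrow> integrable G (\<lambda>x. indicator S x * x)"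
  using integrable_mult_indicator[OF sets_G_I integrable_id] by simp

lemma integrable_ind: "S \<in> sets borel \<Longrightarrow> integrable G (\<lambda>x. (c::real) * indicator S x)"
proof -
  assume "S \<in> sets borel"
  then have "integrable G (indicator S :: real \<Rightarrow> real)"
    by (intro integrable_real_indicator sets_G_I) (auto simp: P.emeasure_finite less_top[symmetric])
  then show ?thesis by (rule Bochner_Integration.integrable_mult_right)
qed

lemma mean_lower:
  assumes S: "S \<in> sets borel" "{p<..<q} \<subseteq> S" "S \<inter> {a..b} \<subseteq> {p..q}" and d: "0 \<le> d"
  shows "(LINT x:S|G. x) - p * measure G S \<ge> d * measure G {p+d<..<q}"
proof -
  have "(LINT x:S|G. x) - p * measure G S = (LINT x|G. indicator S x * x) - (LINT x|G. p * indicator S x)"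
    using S(1) by (simp add: set_lebesgue_integral_def integrable_ind_id integrable_ind)
  also have "\<dots> = (LINT x|G. indicator S x * x - p * indicator S x)"
    using S(1) by (intro Bochner_Integration.integral_diff[symmetric] integrable_ind_id integrable_ind)
  also have "\<dots> \<ge> (LINT x|G. d * indicator {p+d<..<q} x)"
  proof (rule integral_mono_AE)
    show "integrable G (\<lambda>x. indicator S x * x - p * indicator S x)"
      using S(1) by (intro Bochner_Integration.integrable_diff integrable_ind_id integrable_ind)
    show "integrable G (\<lambda>x. d * indicator {p+d<..<q} x)" by (rule integrable_ind) simp
    show "AE x in G. d * indicator {p+d<..<q} x \<le> indicator S x * x - p * indicator S x"
      using AE_ab
    proof eventually_elim
      case (elim x)
      show ?case
      proof (cases "x \<in> {p+d<..<q}")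
        case True
        then have "x \<in> S" using S(2) d by auto
        then show ?thesis using True by auto
      next
        case False
        then show ?thesis using S(3) elim by (auto simp: indicator_def)
      qed
    qed
  qed
  finally show ?thesis by simp
qed

lemma mean_upper:
  assumes S: "S \<in> sets borel" "{p<..<q} \<subseteq> S" "S \<inter> {a..b} \<subseteq> {p..q}" and d: "0 \<le> d"
  shows "q * measure G S - (LINT x:S|G. x) \<ge> d * measure G {p<..<q-d}"
proof -
  have "q * measure G S - (LINT x:S|G. x) = (LINT x|G. q * indicator S x) - (LINT x|G. indicator S x * x)"
    using S(1) by (simp add: set_lebesgue_integral_def integrable_ind_id integrable_ind)
  also have "\<dots> = (LINT x|G. q * indicator S x - indicator S x * x)"
    using S(1) by (intro Bochner_Integration.integral_diff[symmetric] integrable_ind_id integrable_ind)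
  also have "\<dots> \<ge> (LINT x|G. d * indicator {p<..<q-d} x)"
  proof (rule integral_mono_AE)
    show "integrable G (\<lambda>x. q * indicator S x - indicator S x * x)"
      using S(1) by (intro Bochner_Integration.integrable_diff integrable_ind_id integrable_ind)
    show "integrable G (\<lambda>x. d * indicator {p<..<q-d} x)" by (rule integrable_ind) simp
    show "AE x in G. d * indicator {p<..<q-d} x \<le> q * indicator S x - indicator S x * x"
      using AE_ab
    proof eventually_elim
      case (elim x)
      show ?case
      proof (cases "x \<in> {p<..<q-d}")
        case True
        then have "x \<in> S" using S(2) d by auto
        then show ?thesis using True by auto
      next
        case False
        then show ?thesis using S(3) elim by (auto simp: indicator_def)
      qed
    qed
  qed
  finally show ?thesis by simp
qed


lemma mean_props:
  assumes S: "S \<in> sets borel" "{p<..<q} \<subseteq> S" "S \<inter> {a..b} \<subseteq> {p..q}"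
    and pq: "a \<le> p" "p < q" "q \<le> b"
  shows "measure G S > 0" "p < (LINT x:S|G. x)/measure G S" "(LINT x:S|G. x)/measure G S < q"
   and "\<And>d. 0 \<le> d \<Longrightarrow> (LINT x:S|G. x)/measure G S - p \<ge> d * measure G {p+d<..<q}"
   and "\<And>d. 0 \<le> d \<Longrightarrow> q - (LINT x:S|G. x)/measure G S \<ge> d * measure G {p<..<q-d}"
proof -
  have "measure G {p<..<q} \<le> measure G S"
    using S by (intro P.finite_measure_mono) auto
  moreover have "measure G {p<..<q} > 0" using pos pq by auto
  ultimately show mpos: "measure G S > 0" by simp
  have m1: "measure G S \<le> 1" by (rule meas_le1)
  define I where "I = (LINT x:S|G. x)"
  define \<mu> where "\<mu> = measure G S"
  have \<mu>: "0 < \<mu>" "\<mu> \<le> 1" using mpos m1 by (auto simp: \<mu>_def)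
  show low: "(LINT x:S|G. x)/measure G S - p \<ge> d * measure G {p+d<..<q}" if d: "0 \<le> d" for d
  proof -
    have N: "I - p * \<mu> \<ge> d * measure G {p+d<..<q}"
      using mean_lower[OF S d] by (simp add: I_def \<mu>_def)
    have "d * measure G {p+d<..<q} \<ge> 0" using d by simp
    with N have N0: "I - p * \<mu> \<ge> 0" by linarith
    have "(I - p * \<mu>) \<le> (I - p * \<mu>) / \<mu>"
      using \<mu> N0 by (simp add: le_divide_eq mult_left_le)
    also have "(I - p * \<mu>) / \<mu> = I / \<mu> - p" using \<mu> by (simp add: field_simps)
    finally show ?thesis using N by (simp add: I_def \<mu>_def)
  qed
  show upp: "q - (LINT x:S|G. x)/measure G S \<ge> d * measure G {p<..<q-d}" if d: "0 \<le> d" for d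
  proof -
    have N: "q * \<mu> - I \<ge> d * measure G {p<..<q-d}"
      using mean_upper[OF S d] by (simp add: I_def \<mu>_def)
    have "d * measure G {p<..<q-d} \<ge> 0" using d by simp
    with N have N0: "q * \<mu> - I \<ge> 0" by linarith
    have "(q * \<mu> - I) \<le> (q * \<mu> - I) / \<mu>"
      using \<mu> N0 by (simp add: le_divide_eq mult_left_le)
    also have "(q * \<mu> - I) / \<mu> = q - I / \<mu>" using \<mu> by (simp add: field_simps)
    finally show ?thesis using N by (simp add: I_def \<mu>_def)
  qed
  have h: "0 \<le> (q - p) / 2" using pq by simp
  have "a \<le> p + (q-p)/2" "p + (q-p)/2 < q" using pq by (auto simp: field_simps)
  then have "measure G {p + (q-p)/2<..<q} > 0"
    using pq(3) by (rule pos)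
  then have "(q - p) / 2 * measure G {p + (q-p)/2<..<q} > 0"
    using pq by simp
  with low[OF h] show "p < (LINT x:S|G. x)/measure G S" by linarith
  have "p < q - (q-p)/2" "q - (q-p)/2 \<le> b" using pq by (auto simp: field_simps)
  then have "measure G {p<..<q - (q-p)/2} > 0"
    using pq(1) by (intro pos)
  then have "(q - p) / 2 * measure G {p<..<q - (q-p)/2} > 0"
    using pq by simp
  with upp[OF h] show "(LINT x:S|G. x)/measure G S < q" by linarith
qed


definition qq where "qq n l = (if l = 0 then a else if 2^n \<le> l then b else real_of_ereal (sba G T n l))"

lemma infT_le: "infT T \<le> ereal a"
proof -
  have "a \<in> T" using sub ab by auto
  then show ?thesis unfolding infT_def by (intro Inf_lower imageI)
qed
lemma supT_ge: "ereal b \<le> supT T"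
proof -
  have "b \<in> T" using sub ab by auto
  then show ?thesis unfolding supT_def by (intro Sup_upper imageI)
qed

definition Inv where "Inv n \<longleftrightarrow> (\<forall>l. 0<l \<and> l<2^n \<longrightarrow> sba G T n l = ereal (qq n l))
   \<and> (\<forall>l<2^n. qq n l < qq n (Suc l)) \<and> (\<forall>l. a \<le> qq n l \<and> qq n l \<le> b)"

definition Sc where "Sc n k = hoi (sba G T n k) (sba G T n (Suc k))"
definition Mn where "Mn n k = (LINT x:Sc n k|G. x) / measure G (Sc n k)"

lemma Sc_props:
  assumes I: "Inv n" and n: "1 \<le> n" and k: "k < 2^n"
  shows "Sc n k \<in> sets borel" "{qq n k<..<qq n (Suc k)} \<subseteq> Sc n k" "Sc n k \<inter> {a..b} \<subseteq> {qq n k..qq n (Suc k)}"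
proof -
  show "Sc n k \<in> sets borel" unfolding Sc_def hoi_def by measurable
  have L1: "sba G T n k \<le> ereal (qq n k)"
  proof (cases "k = 0")
    case True then show ?thesis using sba_0[OF n] infT_le by (simp add: qq_def)
  next
    case False then show ?thesis using I k by (simp add: Inv_def)
  qed
  have L2: "qq n k \<le> x" if "x \<in> {a..b}" "sba G T n k < ereal x" for x
  proof (cases "k = 0")
    case True then show ?thesis using that by (simp add: qq_def)
  next
    case False then show ?thesis using I k that by (simp add: Inv_def)
  qed
  have U1: "ereal (qq n (Suc k)) \<le> sba G T n (Suc k)"
  proof (cases "Suc k = 2^n")
    case True then show ?thesis using sba_top[OF n] supT_ge by (simp add: qq_def)
  next
    case False then show ?thesis using I k by (simp add: Inv_def)
  qed
  have U2: "x \<le> qq n (Suc k)" if "x \<in> {a..b}" "ereal x \<le> sba G T n (Suc k)" for x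
  proof (cases "Suc k = 2^n")
    case True then show ?thesis using that by (simp add: qq_def)
  next
    case False then show ?thesis using I k that by (simp add: Inv_def)
  qed
  show "{qq n k<..<qq n (Suc k)} \<subseteq> Sc n k"
  proof
    fix x assume "x \<in> {qq n k<..<qq n (Suc k)}"
    then have "sba G T n k < ereal x"
      using L1 by (auto intro: order.strict_trans1)
    moreover have "ereal x \<le> sba G T n (Suc k)"
      using \<open>x \<in> _\<close> U1 by (metis greaterThanLessThan_iff ereal_less_eq(3) less_imp_le order.trans)
    ultimately show "x \<in> Sc n k" by (simp add: Sc_def hoi_def)
  qed
  show "Sc n k \<inter> {a..b} \<subseteq> {qq n k..qq n (Suc k)}"
    using L2 U2 by (auto simp: Sc_def hoi_def)
qed

lemma Mn_props:
  assumes I: "Inv n" and n: "1 \<le> n" and k: "k < 2^n"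
  shows "measure G (Sc n k) > 0" "qq n k < Mn n k" "Mn n k < qq n (Suc k)"
   and "\<And>d. 0 \<le> d \<Longrightarrow> Mn n k - qq n k \<ge> d * measure G {qq n k+d<..<qq n (Suc k)}"
   and "\<And>d. 0 \<le> d \<Longrightarrow> qq n (Suc k) - Mn n k \<ge> d * measure G {qq n k<..<qq n (Suc k)-d}"
proof -
  have pq: "a \<le> qq n k" "qq n k < qq n (Suc k)" "qq n (Suc k) \<le> b" using I k by (auto simp: Inv_def)
  note mp = mean_props[OF Sc_props[OF I n k] pq]
  show "measure G (Sc n k) > 0" by (rule mp(1))
  show "qq n k < Mn n k" "Mn n k < qq n (Suc k)" using mp(2,3) by (simp_all add: Mn_def)
  show "\<And>d. 0 \<le> d \<Longrightarrow> Mn n k - qq n k \<ge> d * measure G {qq n k+d<..<qq n (Suc k)}"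
    using mp(4) by (simp add: Mn_def)
  show "\<And>d. 0 \<le> d \<Longrightarrow> qq n (Suc k) - Mn n k \<ge> d * measure G {qq n k<..<qq n (Suc k)-d}"
    using mp(5) by (simp add: Mn_def)
qed

lemma qq_even:
  assumes I: "Inv n" and n: "1 \<le> n" and k: "k \<le> 2^n"
  shows "qq (Suc n) (2*k) = qq n k"
proof -
  consider "k = 0" | "k = 2^n" | "0 < k" "k < 2^n" using k by linarith
  then show ?thesis
  proof cases
    case 1 then show ?thesis by (simp add: qq_def)
  next
    case 2 then show ?thesis by (simp add: qq_def)
  next
    case 3
    then have "sba G T n k = ereal (qq n k)" using I by (simp add: Inv_def)
    moreover have "sba G T (Suc n) (2*k) = sba G T n k" using sba_even[OF n 3] .
    ultimately show ?thesis using 3 by (simp add: qq_def)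
  qed
qed

lemma qq_odd:
  assumes I: "Inv n" and n: "1 \<le> n" and k: "k < 2^n"
  shows "sba G T (Suc n) (2*k+1) = ereal (Mn n k)" "qq (Suc n) (2*k+1) = Mn n k"
proof -
  have "sba G T (Suc n) (2*k+1) = bG G (sba G T n k) (sba G T n (Suc k))" using n k by (rule sba_odd)
  also have "\<dots> = ereal (Mn n k)"
    using Mn_props(1)[OF I n k] by (simp add: bG_def Mn_def Sc_def)
  finally show 1: "sba G T (Suc n) (2*k+1) = ereal (Mn n k)" .
  have "\<not> 2 ^ Suc n \<le> 2*k+1" using k by simp
  then show "qq (Suc n) (2*k+1) = Mn n k" using 1 by (simp add: qq_def)
qed


lemma Inv_1: "Inv 1"
proof -
  have m1: "measure G UNIV = 1" using P.prob_space by simp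
  have "UNIV \<in> sets borel" "{a<..<b} \<subseteq> UNIV" "UNIV \<inter> {a..b} \<subseteq> {a..b}" by auto
  note mp = mean_props[OF this order.refl ab order.refl]
  have L: "(LINT x:UNIV|G. x) = integral\<^sup>L G (\<lambda>x. x)" by (simp add: set_lebesgue_integral_def)
  have E: "a < integral\<^sup>L G (\<lambda>x. x)" "integral\<^sup>L G (\<lambda>x. x) < b" using mp(2,3) m1 L by simp_all
  have q1: "qq 1 1 = integral\<^sup>L G (\<lambda>x. x)" by (simp add: qq_def)
  have "\<forall>l. 0<l \<and> l<2^1 \<longrightarrow> sba G T 1 l = ereal (qq 1 l)"
  proof (intro allI impI)
    fix l :: nat assume "0<l \<and> l<2^1"
    then have "l = 1" by simp
    then show "sba G T 1 l = ereal (qq 1 l)" using q1 by simp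
  qed
  moreover have "\<forall>l<2^1. qq 1 l < qq 1 (Suc l)"
  proof (intro allI impI)
    fix l :: nat assume "l < 2^1"
    then have "l = 0 \<or> l = 1" by auto
    then show "qq 1 l < qq 1 (Suc l)" using E q1 by (auto simp: qq_def)
  qed
  moreover have "\<forall>l. a \<le> qq 1 l \<and> qq 1 l \<le> b"
  proof
    fix l :: nat
    have "l = 0 \<or> l = 1 \<or> 2^1 \<le> l" by auto
    then show "a \<le> qq 1 l \<and> qq 1 l \<le> b" using E q1 ab by (auto simp: qq_def)
  qed
  ultimately show ?thesis by (simp add: Inv_def)
qed

lemma Inv_step:
  assumes I: "Inv n" and n: "1 \<le> n"
  shows "Inv (Suc n)"
proof -
  have par: "\<exists>k. l = 2*k \<or> l = 2*k+1" for l :: nat by presburger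
  have A: "sba G T (Suc n) l = ereal (qq (Suc n) l)" if l: "0<l" "l<2^Suc n" for l
  proof -
    obtain k where "l = 2*k \<or> l = 2*k+1" using par by blast
    then show ?thesis
    proof
      assume lk: "l = 2*k"
      then have k: "0 < k" "k < 2^n" using l by auto
      have "sba G T (Suc n) l = sba G T n k" using sba_even[OF n k] lk by simp
      also have "\<dots> = ereal (qq n k)" using I k by (simp add: Inv_def)
      also have "qq n k = qq (Suc n) l" using qq_even[OF I n] k lk by simp
      finally show ?thesis .
    next
      assume lk: "l = 2*k+1"
      then have k: "k < 2^n" using l by auto
      show ?thesis using qq_odd[OF I n k] lk by simp
    qed
  qed
  have B: "qq (Suc n) l < qq (Suc n) (Suc l)" if l: "l<2^Suc n" for l
  proof -
    obtain k where "l = 2*k \<or> l = 2*k+1" using par by blast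
    then show ?thesis
    proof
      assume lk: "l = 2*k"
      then have k: "k < 2^n" using l by auto
      have "qq (Suc n) l = qq n k" using qq_even[OF I n] k lk by simp
      also have "\<dots> < Mn n k" by (rule Mn_props(2)[OF I n k])
      also have "\<dots> = qq (Suc n) (Suc l)" using qq_odd[OF I n k] lk by simp
      finally show ?thesis .
    next
      assume lk: "l = 2*k+1"
      then have k: "k < 2^n" using l by auto
      have "qq (Suc n) l = Mn n k" using qq_odd[OF I n k] lk by simp
      also have "\<dots> < qq n (Suc k)" by (rule Mn_props(3)[OF I n k])
      also have "\<dots> = qq (Suc n) (2 * Suc k)" using qq_even[OF I n, of "Suc k"] k by simp
      finally show ?thesis using lk by simp
    qed
  qed
  have C: "a \<le> qq (Suc n) l \<and> qq (Suc n) l \<le> b" for l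
  proof (cases "2^Suc n \<le> l")
    case True then show ?thesis using ab by (simp add: qq_def)
  next
    case False
    then have l: "l < 2^Suc n" by simp
    obtain k where "l = 2*k \<or> l = 2*k+1" using par by blast
    then show ?thesis
    proof
      assume lk: "l = 2*k"
      then have k: "k < 2^n" using l by auto
      have "qq (Suc n) l = qq n k" using qq_even[OF I n] k lk by simp
      then show ?thesis using I by (simp add: Inv_def)
    next
      assume lk: "l = 2*k+1"
      then have k: "k < 2^n" using l by auto
      have "qq (Suc n) l = Mn n k" using qq_odd[OF I n k] lk by simp
      moreover have "a \<le> qq n k" "qq n (Suc k) \<le> b" using I by (auto simp: Inv_def)
      ultimately show ?thesis using Mn_props(2,3)[OF I n k] by simp
    qed
  qed
  show ?thesis unfolding Inv_def using A B C by blast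
qed

lemma Inv_all: "1 \<le> n \<Longrightarrow> Inv n"
proof (induction n rule: dec_induct)
  case base then show ?case by (rule Inv_1)
next
  case (step n) then show ?case using Inv_step by blast
qed


lemma width:
  assumes h: "0 < h" and eta: "0 < \<eta>"
    and Gp: "\<And>s t. a \<le> s \<Longrightarrow> t \<le> b \<Longrightarrow> s + 2*h \<le> t \<Longrightarrow> \<eta> \<le> measure G {s<..<t}"
    and n: "1 \<le> n"
  shows "\<forall>k<2^n. qq n (Suc k) - qq n k < 4*h \<or> qq n (Suc k) - qq n k \<le> (b - a) - (real n - 1) * (2*h*\<eta>)"
  using n
proof (induction n rule: dec_induct)
  case base
  have "a \<le> qq 1 k" "qq 1 (Suc k) \<le> b" for k using Inv_1 by (auto simp: Inv_def)
  then show ?case by (simp add: algebra_simps) (smt (verit))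
next
  case (step n)
  have I: "Inv n" using step Inv_all by simp
  have n: "1 \<le> n" using step by simp
  define \<kappa> where "\<kappa> = 2*h*\<eta>"
  have par: "\<exists>k. l = 2*k \<or> l = 2*k+1" for l :: nat by presburger
  have child: "M - p < 4*h \<or> M - p \<le> (b - a) - (real (Suc n) - 1) * \<kappa>"
         "q - M < 4*h \<or> q - M \<le> (b - a) - (real (Suc n) - 1) * \<kappa>"
    if k: "k < 2^n" and pdef: "p = qq n k" and qdef: "q = qq n (Suc k)" and Mdef: "M = Mn n k" for k p q M
  proof -
    have pM: "p < M" "M < q" using Mn_props(2,3)[OF I n k] pdef qdef Mdef by simp_all
    have IH: "q - p < 4*h \<or> q - p \<le> (b - a) - (real n - 1) * \<kappa>"
      using step.IH k pdef qdef \<kappa>_def by simp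
    have bnd: "a \<le> p" "q \<le> b" using I pdef qdef by (auto simp: Inv_def)
    have "(M - p < 4*h \<or> M - p \<le> (b - a) - (real (Suc n) - 1) * \<kappa>) \<and>
          (q - M < 4*h \<or> q - M \<le> (b - a) - (real (Suc n) - 1) * \<kappa>)"
    proof (cases "q - p < 4*h")
      case True then show ?thesis using pM by auto
    next
      case False
      then have W: "q - p \<le> (b - a) - (real n - 1) * \<kappa>" using IH by simp
      have h2: "0 \<le> 2*h" using h by simp
      have "\<eta> \<le> measure G {p + 2*h<..<q}" using False bnd h by (intro Gp) auto
      then have "\<kappa> \<le> 2*h * measure G {p + 2*h<..<q}" using h by (simp add: \<kappa>_def)
      also have "\<dots> \<le> M - p" using Mn_props(4)[OF I n k h2] pdef qdef Mdef by simp
      finally have K1: "\<kappa> \<le> M - p" .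
      have "\<eta> \<le> measure G {p<..<q - 2*h}" using False bnd h by (intro Gp) auto
      then have "\<kappa> \<le> 2*h * measure G {p<..<q - 2*h}" using h by (simp add: \<kappa>_def)
      also have "\<dots> \<le> q - M" using Mn_props(5)[OF I n k h2] pdef qdef Mdef by simp
      finally have K2: "\<kappa> \<le> q - M" .
      have "real (Suc n) - 1 = (real n - 1) + 1" by simp
      then have "(b - a) - (real (Suc n) - 1) * \<kappa> = (b - a) - (real n - 1) * \<kappa> - \<kappa>"
        by (simp add: algebra_simps)
      then show ?thesis using W K1 K2 by auto
    qed
    then show "M - p < 4*h \<or> M - p \<le> (b - a) - (real (Suc n) - 1) * \<kappa>"
         "q - M < 4*h \<or> q - M \<le> (b - a) - (real (Suc n) - 1) * \<kappa>" by auto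
  qed
  show ?case
  proof (intro allI impI)
    fix l :: nat assume l: "l < 2^Suc n"
    obtain k where "l = 2*k \<or> l = 2*k+1" using par by blast
    then show "qq (Suc n) (Suc l) - qq (Suc n) l < 4*h \<or>
      qq (Suc n) (Suc l) - qq (Suc n) l \<le> (b - a) - (real (Suc n) - 1) * (2*h*\<eta>)"
    proof
      assume lk: "l = 2*k"
      then have k: "k < 2^n" using l by auto
      have "qq (Suc n) l = qq n k" using qq_even[OF I n] k lk by simp
      moreover have "qq (Suc n) (Suc l) = Mn n k" using qq_odd[OF I n k] lk by simp
      ultimately show ?thesis using child(1)[OF k refl refl refl] by (simp add: \<kappa>_def)
    next
      assume lk: "l = 2*k+1"
      then have k: "k < 2^n" using l by auto
      have "qq (Suc n) l = Mn n k" using qq_odd[OF I n k] lk by simp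
      moreover have "qq (Suc n) (Suc l) = qq n (Suc k)" using qq_even[OF I n, of "Suc k"] k lk by simp
      ultimately show ?thesis using child(2)[OF k refl refl refl] by (simp add: \<kappa>_def)
    qed
  qed
qed


lemma grid:
  assumes h: "0 < h"
  shows "\<exists>\<eta>>0. \<forall>s t. a \<le> s \<longrightarrow> t \<le> b \<longrightarrow> s + 2*h \<le> t \<longrightarrow> \<eta> \<le> measure G {s<..<t}"
proof -
  define K where "K = nat \<lfloor>(b-a)/h\<rfloor>"
  define F where "F i = measure G {a + real i*h<..<a + real (Suc i)*h}" for i
  define \<eta> where "\<eta> = Min (insert 1 (F ` {..<K}))"
  have Fpos: "F i > 0" if "i < K" for i
  proof -
    have "Suc i \<le> K" using that by simp
    then have "real (Suc i) \<le> \<lfloor>(b-a)/h\<rfloor>" unfolding K_def by linarith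
    also have "\<dots> \<le> (b-a)/h" by simp
    finally have "real (Suc i) * h \<le> b - a" using h by (simp add: le_divide_eq)
    then have "a + real (Suc i)*h \<le> b" by simp
    moreover have "a \<le> a + real i * h" using h by simp
    moreover have "a + real i * h < a + real (Suc i)*h" using h by simp
    ultimately show ?thesis unfolding F_def by (intro pos) auto
  qed
  have "\<eta> > 0" unfolding \<eta>_def using Fpos by (subst Min_gr_iff) auto
  moreover have "\<eta> \<le> measure G {s<..<t}" if st: "a \<le> s" "t \<le> b" "s + 2*h \<le> t" for s t
  proof -
    define i where "i = nat \<lceil>(s-a)/h\<rceil>"
    have "0 \<le> (s-a)/h" using st h by simp
    then have ri: "real i = \<lceil>(s-a)/h\<rceil>" unfolding i_def by simp
    have c1: "(s-a)/h \<le> real i" using ri by simp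
    have c2: "real i < (s-a)/h + 1" using ri by linarith
    have lo: "s \<le> a + real i * h" using c1 h by (simp add: divide_le_eq algebra_simps)
    have "real i * h < ((s-a)/h + 1) * h" using c2 h by (intro mult_strict_right_mono) auto
    also have "\<dots> = s - a + h" using h by (simp add: field_simps)
    finally have "real i * h < s - a + h" .
    then have up: "a + real (Suc i) * h < s + 2*h" by (simp add: algebra_simps)
    then have "real (Suc i) * h < b - a" using st by simp
    then have "real (Suc i) < (b-a)/h" using h by (simp add: less_divide_eq)
    then have "int (Suc i) \<le> \<lfloor>(b-a)/h\<rfloor>" by (subst le_floor_iff) simp
    then have iK: "i < K" unfolding K_def by linarith
    have "\<eta> \<le> F i" unfolding \<eta>_def using iK by (intro Min_le) auto
    also have "F i \<le> measure G {s<..<t}" unfolding F_def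
      using lo up st by (intro P.finite_measure_mono) auto
    finally show ?thesis .
  qed
  ultimately show ?thesis by blast
qed


lemma small_width:
  assumes d: "0 < \<delta>"
  shows "\<exists>N\<ge>1. \<forall>n\<ge>N. \<forall>k<2^n. qq n (Suc k) - qq n k < \<delta>"
proof -
  define h where "h = \<delta>/4"
  have h: "0 < h" using d by (simp add: h_def)
  obtain \<eta> where eta: "\<eta> > 0" and Gp: "\<And>s t. a \<le> s \<Longrightarrow> t \<le> b \<Longrightarrow> s + 2*h \<le> t \<Longrightarrow> \<eta> \<le> measure G {s<..<t}"
    using grid[OF h] by blast
  define \<kappa> where "\<kappa> = 2*h*\<eta>"
  have \<kappa>: "\<kappa> > 0" using h eta by (simp add: \<kappa>_def)
  define N where "N = nat \<lceil>(b-a)/\<kappa>\<rceil> + 2"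
  have "\<forall>k<2^n. qq n (Suc k) - qq n k < \<delta>" if n: "N \<le> n" for n
  proof (intro allI impI)
    fix k :: nat assume k: "k < 2^n"
    have n1: "1 \<le> n" using n by (simp add: N_def)
    have W: "qq n (Suc k) - qq n k < 4*h \<or> qq n (Suc k) - qq n k \<le> (b - a) - (real n - 1) * \<kappa>"
      using width[OF h eta Gp n1] k by (simp add: \<kappa>_def)
    have "(b-a)/\<kappa> \<le> real (nat \<lceil>(b-a)/\<kappa>\<rceil>)" by linarith
    also have "\<dots> < real n - 1" using n by (simp add: N_def)
    finally have "(b-a)/\<kappa> * \<kappa> < (real n - 1) * \<kappa>" using \<kappa> by (intro mult_strict_right_mono) auto
    then have "b - a < (real n - 1) * \<kappa>" using \<kappa> by simp
    moreover have "qq n k < qq n (Suc k)" using Inv_all[OF n1] k by (simp add: Inv_def)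
    ultimately show "qq n (Suc k) - qq n k < \<delta>" using W by (auto simp: h_def)
  qed
  moreover have "1 \<le> N" by (simp add: N_def)
  ultimately show ?thesis by blast
qed

lemma qq_mono:
  assumes n: "1 \<le> n" and ij: "i < j" and j: "j \<le> 2^n"
  shows "qq n i < qq n j"
  using ij j
proof (induction j)
  case 0 then show ?case by simp
next
  case (Suc j)
  have s: "qq n j < qq n (Suc j)" using Inv_all[OF n] Suc.prems by (simp add: Inv_def)
  show ?case
  proof (cases "i = j")
    case True then show ?thesis using s by simp
  next
    case False then have "i < j" using Suc.prems by simp
    then show ?thesis using Suc.IH Suc.prems s by simp
  qed
qed

lemma qq_le: "1 \<le> n \<Longrightarrow> i \<le> j \<Longrightarrow> j \<le> 2^n \<Longrightarrow> qq n i \<le> qq n j"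
  using qq_mono[of n i j] by (cases "i = j") auto

lemma cell_char:
  assumes n: "1 \<le> n" and x: "x \<in> {a..b}" and l: "1 \<le> l" "l \<le> 2^n"
  shows "x \<in> cell G T n l \<longleftrightarrow> (if l = 1 then x \<le> qq n 1 else qq n (l-1) < x \<and> x \<le> qq n l)"
proof -
  have I: "Inv n" using Inv_all[OF n] .
  have n2: "1 < (2::nat)^n" using n by (intro one_less_power) auto
  show ?thesis
  proof (cases "l = 1")
    case True
    have "sba G T n 1 = ereal (qq n 1)" using I n2 by (simp add: Inv_def)
    moreover have "sba G T n 0 \<le> ereal x" using sba_0[OF n] infT_le x by (auto intro: order.trans)
    ultimately show ?thesis using True by (simp add: cell_def)
  next
    case False
    then have l2: "0 < l - 1" "l - 1 < 2^n" using l by auto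
    have lo: "sba G T n (l-1) = ereal (qq n (l-1))" using I l2 by (simp add: Inv_def)
    have hi: "ereal x \<le> sba G T n l \<longleftrightarrow> x \<le> qq n l"
    proof (cases "l = 2^n")
      case True
      then have "sba G T n l = supT T" "qq n l = b" using sba_top[OF n] by (auto simp: qq_def)
      have "ereal x \<le> ereal b" using x by simp
      then have "ereal x \<le> supT T" using supT_ge by (rule order.trans)
      then show ?thesis using x \<open>sba G T n l = supT T\<close> \<open>qq n l = b\<close> by simp
    next
      case False
      then have "sba G T n l = ereal (qq n l)" using I l by (simp add: Inv_def)
      then show ?thesis by simp
    qed
    show ?thesis using False lo hi by (simp add: cell_def hoi_def)
  qed
qed

lemma cell_in:
  assumes n: "1 \<le> n" and x: "x \<in> {a..b}" and l: "1 \<le> l" "l \<le> 2^n" and c: "x \<in> cell G T n l"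
  shows "qq n (l-1) \<le> x" "x \<le> qq n l"
proof -
  have "qq n 0 = a" by (simp add: qq_def)
  then show "qq n (l-1) \<le> x" "x \<le> qq n l" using cell_char[OF n x l] c x by (auto split: if_splits)
qed

lemma cell_unique:
  assumes n: "1 \<le> n" and x: "x \<in> {a..b}"
  shows "\<exists>l0. 1 \<le> l0 \<and> l0 \<le> 2^n \<and> x \<in> cell G T n l0 \<and>
     (\<forall>l. 1 \<le> l \<and> l \<le> 2^n \<and> x \<in> cell G T n l \<longrightarrow> l = l0)"
proof -
  have disj: "l = l'" if "1 \<le> l" "l \<le> 2^n" "1 \<le> l'" "l' \<le> 2^n" "x \<in> cell G T n l" "x \<in> cell G T n l'" for l l'
  proof (rule ccontr)
    assume "l \<noteq> l'"
    then consider "l < l'" | "l' < l" by linarith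
    then show False
    proof cases
      case 1
      then have "x \<le> qq n l" using cell_in[OF n x that(1,2,5)] by simp
      moreover have "qq n l \<le> qq n (l'-1)" using 1 that by (intro qq_le[OF n]) auto
      moreover have "qq n (l'-1) < x" using cell_char[OF n x that(3,4)] that 1 by (simp split: if_splits)
      ultimately show False by simp
    next
      case 2
      then have "x \<le> qq n l'" using cell_in[OF n x that(3,4,6)] by simp
      moreover have "qq n l' \<le> qq n (l-1)" using 2 that by (intro qq_le[OF n]) auto
      moreover have "qq n (l-1) < x" using cell_char[OF n x that(1,2)] that 2 by (simp split: if_splits)
      ultimately show False by simp
    qed
  qed
  have n2: "1 \<le> (2::nat)^n" by simp
  have "\<exists>l0. 1 \<le> l0 \<and> l0 \<le> 2^n \<and> x \<in> cell G T n l0"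
  proof (cases "x \<le> qq n 1")
    case True
    then show ?thesis using cell_char[OF n x order.refl n2] n2 by auto
  next
    case False
    define l0 where "l0 = (LEAST l. x \<le> qq n l)"
    have tb: "x \<le> qq n (2^n)" using x by (simp add: qq_def)
    have L1: "x \<le> qq n l0" unfolding l0_def by (rule LeastI[of _ "2^n"]) (rule tb)
    have L2: "l0 \<le> 2^n" unfolding l0_def by (rule Least_le) (rule tb)
    have L3: "\<not> x \<le> qq n l" if "l < l0" for l using not_less_Least[OF that[unfolded l0_def]] .
    have q01: "qq n 0 < qq n 1" using qq_mono[OF n, of 0 1] n2 by simp
    have "l0 \<noteq> 0"
    proof
      assume "l0 = 0" then have "x \<le> qq n 0" using L1 by simp
      then show False using False q01 by simp
    qed
    moreover have "l0 \<noteq> 1"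
    proof
      assume "l0 = 1" then show False using L1 False by simp
    qed
    ultimately have l02: "2 \<le> l0" by simp
    have "qq n (l0 - 1) < x" using L3[of "l0 - 1"] l02 by simp
    then have "x \<in> cell G T n l0" using cell_char[OF n x _ L2] l02 L1 by simp
    then show ?thesis using l02 L2 by (intro exI[of _ l0]) auto
  qed
  then show ?thesis using disj by blast
qed


lemma cell_meas: "cell G T n l \<in> sets borel"
proof (cases "l = 1")
  case True
  have "{x::real. sba G T n 0 \<le> ereal x \<and> ereal x \<le> sba G T n 1} \<in> sets borel" by measurable
  then show ?thesis using True by (simp add: cell_def)
next
  case False
  have "hoi (sba G T n (l - 1)) (sba G T n l) \<in> sets borel" unfolding hoi_def by measurable
  then show ?thesis using False by (simp add: cell_def)
qed

lemma error_bound: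
  assumes n: "1 \<le> n" and W: "\<forall>k<2^n. qq n (Suc k) - qq n k < \<delta>"
    and uc: "\<And>x y. x \<in> {a..b} \<Longrightarrow> y \<in> {a..b} \<Longrightarrow> \<bar>x - y\<bar> < \<delta> \<Longrightarrow> \<bar>f x - f y\<bar> \<le> \<epsilon>"
    and fc: "continuous_on T f" and fb: "bounded (f ` T)"
  shows "\<bar>int_Gn G T n f - (LINT x:T|G. f x)\<bar> \<le> \<epsilon>"
proof -
  have I: "Inv n" using Inv_all[OF n] .
  define c where "c l = real_of_ereal (sba G T (Suc n) (2*l - 1))" for l
  have cM: "c l = Mn n (l-1)" if "1 \<le> l" "l \<le> 2^n" for l
  proof -
    have e: "2*l - 1 = 2*(l-1)+1" using that by simp
    have "l - 1 < 2^n" using that by simp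
    then have "sba G T (Suc n) (2*(l-1)+1) = ereal (Mn n (l-1))" by (rule qq_odd(1)[OF I n])
    then show ?thesis unfolding c_def e by simp
  qed
  define g where "g x = (\<Sum>l=1..2^n. f (c l) * indicator (cell G T n l) x)" for x
  define fT where "fT x = indicator T x * f x" for x
  have intc: "integrable G (\<lambda>x. f (c l) * indicator (cell G T n l) x)" for l
    by (rule integrable_ind[OF cell_meas])
  have ig: "integrable G g" unfolding g_def
    by (rule Bochner_Integration.integrable_sum) (rule intc)
  have "integral\<^sup>L G g = (\<Sum>l=1..2^n. integral\<^sup>L G (\<lambda>x. f (c l) * indicator (cell G T n l) x))"
    unfolding g_def by (rule Bochner_Integration.integral_sum) (rule intc)
  also have "\<dots> = (\<Sum>l=1..2^n. f (c l) * measure G (cell G T n l))"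
    by (rule sum.cong[OF refl]) (simp only: integral_mult_right_zero Bochner_Integration.integral_indicator space_G Int_UNIV_right)
  also have "\<dots> = int_Gn G T n f" unfolding int_Gn_def c_def by (rule sum.cong[OF refl]) (rule mult.commute)
  finally have gI: "integral\<^sup>L G g = int_Gn G T n f" .
  have fTI: "(LINT x:T|G. f x) = integral\<^sup>L G fT" unfolding set_lebesgue_integral_def fT_def by simp
  obtain B where B: "\<And>y. y \<in> T \<Longrightarrow> \<bar>f y\<bar> \<le> B" using fb unfolding bounded_real by blast
  have "(\<lambda>x. indicator T x *\<^sub>R f x) \<in> borel_measurable borel"
    by (rule borel_measurable_continuous_on_indicator[OF borel_closed[OF closedT] fc])
  then have "(\<lambda>x. indicator T x * f x) \<in> borel_measurable borel" by (simp only: real_scaleR_def)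
  then have mfT: "fT \<in> borel_measurable G"
    unfolding meas_G fT_def[abs_def] .
  have ifT: "integrable G fT"
  proof -
    have 1: "integrable G (\<lambda>x. B)" by simp
    have "norm (fT x) \<le> norm B" for x
      using B[of x] by (cases "x \<in> T") (auto simp: fT_def)
    then have 3: "AE x in G. norm (fT x) \<le> norm B" by (rule AE_I2)
    show ?thesis by (rule Bochner_Integration.integrable_bound[OF 1 mfT 3])
  qed
  have pw: "\<bar>g x - fT x\<bar> \<le> \<epsilon>" if x: "x \<in> {a..b}" for x
  proof -
    from cell_unique[OF n x] obtain l0 where l0all: "1 \<le> l0 \<and> l0 \<le> 2^n \<and> x \<in> cell G T n l0 \<and>
     (\<forall>l. 1 \<le> l \<and> l \<le> 2^n \<and> x \<in> cell G T n l \<longrightarrow> l = l0)" by (elim exE)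
    then have l0: "1 \<le> l0" "l0 \<le> 2^n" "x \<in> cell G T n l0" by simp_all
    have un: "l = l0" if "1 \<le> l" "l \<le> 2^n" "x \<in> cell G T n l" for l
      using l0all that by blast
    have ind: "f (c l) * indicator (cell G T n l) x = (if l = l0 then f (c l) else 0)"
      if "l \<in> {1..2^n}" for l
    proof (cases "l = l0")
      case True then show ?thesis using l0(3) by simp
    next
      case False
      then have "x \<notin> cell G T n l" using un that by auto
      then show ?thesis using False by simp
    qed
    have "g x = (\<Sum>l=1..2^n. if l = l0 then f (c l) else 0)"
      unfolding g_def by (rule sum.cong[OF refl]) (rule ind)
    also have "\<dots> = f (c l0)" using l0(1,2) by (subst sum.delta) auto
    finally have gx: "g x = f (c l0)" .
    have "x \<in> T" using x sub by blast
    then have fx: "fT x = f x" by (simp add: fT_def)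
    have k: "l0 - 1 < 2^n" and sk: "Suc (l0 - 1) = l0" using l0 by auto
    have M: "qq n (l0-1) < Mn n (l0-1)" "Mn n (l0-1) < qq n l0"
      using Mn_props(2,3)[OF I n k] sk by simp_all
    have xin: "qq n (l0-1) \<le> x" "x \<le> qq n l0" using cell_in[OF n x l0(1,2,3)] by simp_all
    have "qq n (Suc (l0-1)) - qq n (l0-1) < \<delta>" using W k by blast
    then have w: "qq n l0 - qq n (l0-1) < \<delta>" unfolding sk .
    have ab2: "a \<le> qq n (l0-1)" "qq n l0 \<le> b" using I by (simp_all add: Inv_def)
    have cl: "c l0 = Mn n (l0-1)" using cM[OF l0(1,2)] .
    have cab: "c l0 \<in> {a..b}" unfolding cl using M ab2 by simp
    have "c l0 - x < \<delta>" "x - c l0 < \<delta>" unfolding cl using M xin w by linarith+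
    then have "\<bar>c l0 - x\<bar> < \<delta>" by (simp add: abs_less_iff)
    then have "\<bar>f (c l0) - f x\<bar> \<le> \<epsilon>" using uc[OF cab x] by simp
    then show ?thesis using gx fx by simp
  qed
  have "int_Gn G T n f - (LINT x:T|G. f x) = integral\<^sup>L G (\<lambda>x. g x - fT x)"
    using gI fTI ig ifT by simp
  also have "\<bar>\<dots>\<bar> \<le> integral\<^sup>L G (\<lambda>x. \<bar>g x - fT x\<bar>)"
    using integral_norm_bound[of G "\<lambda>x. g x - fT x"] by simp
  also have "\<dots> \<le> integral\<^sup>L G (\<lambda>x. \<epsilon>)"
  proof (rule integral_mono_AE)
    show "integrable G (\<lambda>x. \<bar>g x - fT x\<bar>)" using ig ifT by simp
    show "integrable G (\<lambda>x. \<epsilon>)" by simp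
    show "AE x in G. \<bar>g x - fT x\<bar> \<le> \<epsilon>" using AE_ab by eventually_elim (rule pw)
  qed
  also have "\<dots> = \<epsilon>" using P.prob_space by simp
  finally show ?thesis .
qed

end

lemma admissible_closed: "admissible_Theta T \<Longrightarrow> closed T"
  unfolding admissible_Theta_def
  by (elim disjE exE conjE) (simp_all only: closed_UNIV closed_atLeast closed_atMost closed_atLeastAtMost)

theorem lemma6:
  fixes T :: "real set" and G :: "real measure" and m :: nat
    and f :: "nat \<Rightarrow> real \<Rightarrow> real" and \<epsilon> :: "nat \<Rightarrow> real"
  assumes "admissible_Theta T"
    and "P_star T G"
    and "\<And>i. i \<in> {1..m} \<Longrightarrow> continuous_on T (f i) \<and> bounded (f i ` T)"
    and "\<And>i. i \<in> {1..m} \<Longrightarrow> \<epsilon> i > 0"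
  shows "\<exists>n\<ge>1. \<forall>i\<in>{1..m}. \<bar>int_Gn G T n (f i) - (LINT x:T|G. f i x)\<bar> < \<epsilon> i"
proof -
  have cT: "closed T" using admissible_closed[OF assms(1)] .
  have sG: "sets G = sets borel" and pG: "prob_space G" and nT: "emeasure G (UNIV - T) = 0"
    using assms(2) by (auto simp: P_star_def)
  obtain a b where ab: "a < b" and supp: "real_support G = {a..b}"
    using assms(2) unfolding P_star_def by blast
  interpret P: prob_space G by (rule pG)
  have inS: "\<And>S. S \<in> sets borel \<Longrightarrow> S \<in> sets G" using sG by simp
  have spos: "emeasure G (ball x e) > 0" if "x \<in> {a..b}" "e > 0" for x e
    using that supp unfolding real_support_def by blast
  have sub: "{a..b} \<subseteq> T"
  proof
    fix x assume x: "x \<in> {a..b}"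
    show "x \<in> T"
    proof (rule ccontr)
      assume "x \<notin> T"
      then have "x \<in> UNIV - T" by simp
      moreover have "open (UNIV - T)" using cT by (simp add: open_Diff)
      ultimately obtain e where e: "e > 0" "ball x e \<subseteq> UNIV - T" using open_contains_ball by blast
      have "emeasure G (ball x e) \<le> emeasure G (UNIV - T)"
        using e cT by (intro emeasure_mono inS) auto
      then have "emeasure G (ball x e) = 0" using nT by simp
      then show False using spos[OF x e(1)] by simp
    qed
  qed
  have null_out: "emeasure G (UNIV - {a..b}) = 0"
  proof -
    define F where "F = {B :: real set. open B \<and> emeasure G B = 0}"
    have opF: "\<And>S. S \<in> F \<Longrightarrow> open S" by (simp add: F_def)
    obtain F' where F': "F' \<subseteq> F" "countable F'" "\<Union>F' = \<Union>F"
      by (rule Lindelof[OF opF])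
    have "\<Union>F' \<in> null_sets G"
    proof -
      have "B \<in> null_sets G" if "B \<in> F'" for B
      proof -
        have "open B" "emeasure G B = 0" using that F'(1) by (auto simp: F_def)
        moreover have "B \<in> sets G" using inS[OF borel_open[OF \<open>open B\<close>]] .
        ultimately show ?thesis by (simp add: null_sets_def)
      qed
      then have "(\<Union>B\<in>F'. B) \<in> null_sets G"
        using F'(2) by (intro null_sets_UN')
      then show ?thesis by (simp only: image_ident)
    qed
    moreover have "UNIV - {a..b} \<subseteq> \<Union>F"
    proof
      fix x :: real assume "x \<in> UNIV - {a..b}"
      then have "x \<notin> real_support G" using supp by blast
      then obtain e where e: "e > 0" "\<not> emeasure G (ball x e) > 0" unfolding real_support_def by blast
      then have "emeasure G (ball x e) = 0" by (simp only: not_gr_zero)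
      then have "ball x e \<in> F" by (simp add: F_def)
      moreover have "x \<in> ball x e" using e(1) by simp
      ultimately show "x \<in> \<Union>F" by (rule UnionI)
    qed
    moreover have "UNIV - {a..b} \<in> sets G"
      by (rule inS[OF borel_open[OF open_Diff[OF open_UNIV closed_atLeastAtMost]]])
    ultimately have "UNIV - {a..b} \<in> null_sets G" unfolding F'(3)[symmetric]
      using null_sets_subset by blast
    then show ?thesis by (rule null_setsD1)
  qed
  have pos: "measure G {x<..<y} > 0" if "a \<le> x" "x < y" "y \<le> b" for x y
  proof -
    have "ball ((x+y)/2) ((y-x)/2) = {x<..<y}"
      by (rule greaterThanLessThan_eq_ball[symmetric])
    moreover have "emeasure G (ball ((x+y)/2) ((y-x)/2)) > 0" using that by (intro spos) auto
    ultimately have "emeasure G {x<..<y} > 0" by simp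
    then show ?thesis using P.emeasure_eq_measure by simp
  qed
  interpret C: sba_ctx G T a b
    using sG pG ab null_out pos sub cT by (unfold_locales; blast)
  have ev: "\<forall>i\<in>{1..m}. eventually (\<lambda>n. \<bar>int_Gn G T n (f i) - (LINT x:T|G. f i x)\<bar> < \<epsilon> i) sequentially"
  proof
    fix i assume i: "i \<in> {1..m}"
    have fc: "continuous_on T (f i)" and fb: "bounded (f i ` T)" and ep: "\<epsilon> i > 0"
      using assms(3,4)[OF i] by auto
    have "uniformly_continuous_on {a..b} (f i)"
      using continuous_on_subset[OF fc sub] by (intro compact_uniformly_continuous) auto
    moreover have "\<epsilon> i / 2 > 0" using ep by simp
    ultimately obtain \<delta> where d: "\<delta> > 0" and dd0: "\<forall>x\<in>{a..b}. \<forall>y\<in>{a..b}. dist y x < \<delta> \<longrightarrow> dist (f i y) (f i x) < \<epsilon> i / 2"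
      unfolding uniformly_continuous_on_def by blast
    have dd: "dist (f i y) (f i x) < \<epsilon> i / 2" if "x \<in> {a..b}" "y \<in> {a..b}" "dist y x < \<delta>" for x y
      using dd0 that by blast
    obtain N where N: "N \<ge> 1" "\<And>n. n \<ge> N \<Longrightarrow> \<forall>k<2^n. C.qq n (Suc k) - C.qq n k < \<delta>"
      using C.small_width[OF d] by blast
    have "\<bar>int_Gn G T n (f i) - (LINT x:T|G. f i x)\<bar> < \<epsilon> i" if n: "N \<le> n" for n
    proof -
      have uc: "\<bar>f i x - f i y\<bar> \<le> \<epsilon> i / 2" if "x \<in> {a..b}" "y \<in> {a..b}" "\<bar>x - y\<bar> < \<delta>" for x y
        using dd[OF that(2,1)] that(3) by (simp add: dist_real_def abs_minus_commute)
      have n1: "1 \<le> n" using n N(1) by simp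
      have "\<bar>int_Gn G T n (f i) - (LINT x:T|G. f i x)\<bar> \<le> \<epsilon> i / 2"
        by (rule C.error_bound[OF n1 N(2)[OF n] uc fc fb])
      then show ?thesis using ep by simp
    qed
    then show "eventually (\<lambda>n. \<bar>int_Gn G T n (f i) - (LINT x:T|G. f i x)\<bar> < \<epsilon> i) sequentially"
      by (rule eventually_sequentiallyI)
  qed
  have "eventually (\<lambda>n. \<forall>i\<in>{1..m}. \<bar>int_Gn G T n (f i) - (LINT x:T|G. f i x)\<bar> < \<epsilon> i) sequentially"
    using ev by (intro eventually_ball_finite) auto
  moreover have "eventually (\<lambda>n. 1 \<le> n) sequentially" by (rule eventually_ge_at_top)
  ultimately have "eventually (\<lambda>n. 1 \<le> n \<and> (\<forall>i\<in>{1..m}. \<bar>int_Gn G T n (f i) - (LINT x:T|G. f i x)\<bar> < \<epsilon> i)) sequentially"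
    by (rule eventually_conj[rotated])
  then obtain N where "\<And>n. n \<ge> N \<Longrightarrow> 1 \<le> n \<and> (\<forall>i\<in>{1..m}. \<bar>int_Gn G T n (f i) - (LINT x:T|G. f i x)\<bar> < \<epsilon> i)"
    unfolding eventually_sequentially by blast
  then show ?thesis by blast
qed

end
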